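(* Let $\Delta\subseteq\mathbb{Q}^2$ be a Fano triangle of Gorenstein index $g$. If the reduced weight system of $\Delta$ is $(1,1,1)$, then $g$ is odd.
   Context: A Fano triangle is a 2-dimensional simplex with primitive vertices in $\mathbb{Z}^2$ and the origin in its interior; its Gorenstein index is the least $g\ge1$ with $g\Delta^*$ having integral vertices, $\Delta^*=\{u:\langle u,v\rangle\ge-1\ \forall v\in\Delta\}$. For vertices $v_0,v_1,v_2$, the weight system is $(q_0,q_1,q_2)$ with $q_i=|\det(v_j:j\ne i)|$, and its reduction is the tuple divided by $\gcd(q_0,q_1,q_2)$. *)

theory Defs
  imports "HOL-Analysis.Analysis"
begin

definition primitive :: "int \<times> int \<Rightarrow> bool" where
  "primitive v \<longleftrightarrow> gcd (fst v) (snd v) = 1"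

definition rvec :: "int \<times> int \<Rightarrow> real \<times> real" where
  "rvec v = (real_of_int (fst v), real_of_int (snd v))"

definition triangle :: "int \<times> int \<Rightarrow> int \<times> int \<Rightarrow> int \<times> int \<Rightarrow> (real \<times> real) set" where
  "triangle v0 v1 v2 = convex hull {rvec v0, rvec v1, rvec v2}"

definition fano_triangle :: "int \<times> int \<Rightarrow> int \<times> int \<Rightarrow> int \<times> int \<Rightarrow> bool" where
  "fano_triangle v0 v1 v2 \<longleftrightarrow>
     primitive v0 \<and> primitive v1 \<and> primitive v2 \<and>
     \<not> collinear {rvec v0, rvec v1, rvec v2} \<and>
     0 \<in> interior (triangle v0 v1 v2)"

definition dual_polytope :: "(real \<times> real) set \<Rightarrow> (real \<times> real) set" where
  "dual_polytope S = {u. \<forall>v\<in>S. inner u v \<ge> -1}"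

definition integral_point :: "real \<times> real \<Rightarrow> bool" where
  "integral_point p \<longleftrightarrow> fst p \<in> \<int> \<and> snd p \<in> \<int>"

definition gorenstein_index :: "(real \<times> real) set \<Rightarrow> nat" where
  "gorenstein_index S = (LEAST g::nat. g \<ge> 1 \<and>
     (\<forall>u. u extreme_point_of ((\<lambda>x. real g *\<^sub>R x) ` dual_polytope S) \<longrightarrow> integral_point u))"

definition det2 :: "int \<times> int \<Rightarrow> int \<times> int \<Rightarrow> int" where
  "det2 a b = fst a * snd b - snd a * fst b"

definition weight_system :: "int \<times> int \<Rightarrow> int \<times> int \<Rightarrow> int \<times> int \<Rightarrow> int \<times> int \<times> int" where
  "weight_system v0 v1 v2 = (\<bar>det2 v1 v2\<bar>, \<bar>det2 v0 v2\<bar>, \<bar>det2 v0 v1\<bar>)"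

definition reduced_weight_system :: "int \<times> int \<Rightarrow> int \<times> int \<Rightarrow> int \<times> int \<Rightarrow> int \<times> int \<times> int" where
  "reduced_weight_system v0 v1 v2 =
     (case weight_system v0 v1 v2 of (q0, q1, q2) \<Rightarrow>
        let d = gcd q0 (gcd q1 q2) in (q0 div d, q1 div d, q2 div d))"

end

theory Submission
  imports Defs
begin
lemma ext_scale:
  fixes c :: real and x :: "real \<times> real"
  assumes "c \<noteq> 0"
  shows "(c *\<^sub>R x) extreme_point_of ((\<lambda>x. c *\<^sub>R x) ` S) \<longleftrightarrow> x extreme_point_of S"
proof -
  have l: "linear (\<lambda>x::real\<times>real. c *\<^sub>R x)" by (simp add: linearI scaleR_add_right)
  have i: "inj (\<lambda>x::real\<times>real. c *\<^sub>R x)" using assms by (simp add: inj_def)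
  have "(\<lambda>x. c *\<^sub>R x) ` {x} face_of (\<lambda>x. c *\<^sub>R x) ` S \<longleftrightarrow> {x} face_of S"
    by (rule face_of_linear_image[OF l i])
  then show ?thesis by (simp add: face_of_singleton)
qed

lemma dual_eq:
  "dual_polytope (triangle v0 v1 v2) = {u. inner u (rvec v0) \<ge> -1 \<and> inner u (rvec v1) \<ge> -1 \<and> inner u (rvec v2) \<ge> -1}"
proof
  show "dual_polytope (triangle v0 v1 v2) \<subseteq> {u. inner u (rvec v0) \<ge> -1 \<and> inner u (rvec v1) \<ge> -1 \<and> inner u (rvec v2) \<ge> -1}"
    unfolding dual_polytope_def triangle_def using hull_subset[of "{rvec v0, rvec v1, rvec v2}" convex]
    by blast
next
  show "{u. inner u (rvec v0) \<ge> -1 \<and> inner u (rvec v1) \<ge> -1 \<and> inner u (rvec v2) \<ge> -1} \<subseteq> dual_polytope (triangle v0 v1 v2)"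
  proof
    fix u assume "u \<in> {u. inner u (rvec v0) \<ge> -1 \<and> inner u (rvec v1) \<ge> -1 \<and> inner u (rvec v2) \<ge> -1}"
    then have h: "inner u (rvec v0) \<ge> -1" "inner u (rvec v1) \<ge> -1" "inner u (rvec v2) \<ge> -1" by auto
    show "u \<in> dual_polytope (triangle v0 v1 v2)"
      unfolding dual_polytope_def triangle_def convex_hull_3
    proof (clarsimp simp: inner_add_right)
      fix a b c :: real assume abc: "0 \<le> a" "0 \<le> b" "0 \<le> c" "a + b + c = 1"
      have "a * inner u (rvec v0) \<ge> a * -1" using abc h by (intro mult_left_mono) auto
      moreover have "b * inner u (rvec v1) \<ge> b * -1" using abc h by (intro mult_left_mono) auto
      moreover have "c * inner u (rvec v2) \<ge> c * -1" using abc h by (intro mult_left_mono) auto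
      ultimately show "- 1 \<le> a * inner u (rvec v0) + b * inner u (rvec v1) + c * inner u (rvec v2)"
        using abc by linarith
    qed
  qed
qed

lemma noext:
  fixes a b c w :: "real \<times> real"
  assumes c: "c \<noteq> 0" and wa: "inner w a > -1" and wb: "inner w b > -1"
    and P: "P = {u. inner u a \<ge> -1 \<and> inner u b \<ge> -1 \<and> inner u c \<ge> -1}" and wP: "w \<in> P"
  shows "\<not> w extreme_point_of P"
proof
  assume ext: "w extreme_point_of P"
  define z :: "real \<times> real" where "z = (- snd c, fst c)"
  have zc: "inner z c = 0" unfolding z_def by (cases c) (simp add: inner_Pair)
  have z0: "z \<noteq> 0" using c unfolding z_def by (cases c) (auto simp: zero_prod_def)
  define m where "m = min (inner w a + 1) (inner w b + 1)"
  define M where "M = \<bar>inner z a\<bar> + \<bar>inner z b\<bar> + 1"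
  define e where "e = m / M"
  have m0: "m > 0" using wa wb unfolding m_def by auto
  have M0: "M > 0" unfolding M_def by auto
  have e0: "e > 0" using m0 M0 unfolding e_def by auto
  have eM: "e * M = m" unfolding e_def using M0 by auto
  have ea: "e * \<bar>inner z a\<bar> \<le> m" using eM e0 unfolding M_def
    by (smt (verit) abs_ge_zero mult_left_mono distrib_left)
  have eb: "e * \<bar>inner z b\<bar> \<le> m" using eM e0 unfolding M_def
    by (smt (verit) abs_ge_zero mult_left_mono distrib_left)
  have wc: "inner w c \<ge> -1" using wP P by auto
  have ia: "\<bar>e * inner z a\<bar> \<le> m" using ea e0 by (simp add: abs_mult)
  have ib: "\<bar>e * inner z b\<bar> \<le> m" using eb e0 by (simp add: abs_mult)
  have p1: "w + e *\<^sub>R z \<in> P" unfolding P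
    using ia ib wc zc m_def by (auto simp: inner_add_left) 
  have p2: "w - e *\<^sub>R z \<in> P" unfolding P
    using ia ib wc zc m_def by (auto simp: inner_diff_left)
  have ne: "w - e *\<^sub>R z \<noteq> w + e *\<^sub>R z"
  proof
    assume "w - e *\<^sub>R z = w + e *\<^sub>R z"
    then have "(w + e *\<^sub>R z) - (w - e *\<^sub>R z) = 0" by simp
    moreover have "(w + e *\<^sub>R z) - (w - e *\<^sub>R z) = (e+e) *\<^sub>R z" by (simp add: scaleR_left_distrib[symmetric] del: scaleR_left_distrib)
    ultimately show False using e0 z0 by simp
  qed
  have mid: "midpoint (w - e *\<^sub>R z) (w + e *\<^sub>R z) = w"
    by (simp add: midpoint_def algebra_simps) (simp add: scaleR_2[symmetric])
  have "w \<in> open_segment (w - e *\<^sub>R z) (w + e *\<^sub>R z)"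
    using midpoint_in_open_segment[of "w - e *\<^sub>R z" "w + e *\<^sub>R z"] ne mid by simp
  then show False using ext p1 p2 unfolding extreme_point_of_def by blast
qed

lemma cramer:
  fixes a b :: "int \<times> int" and w :: "real \<times> real"
  assumes "inner w (rvec a) = -1" "inner w (rvec b) = -1"
  shows "real_of_int (det2 a b) * fst w \<in> \<int> \<and> real_of_int (det2 a b) * snd w \<in> \<int>"
proof -
  obtain p q where w: "w = (p,q)" by (cases w)
  obtain xa ya where a: "a = (xa,ya)" by (cases a)
  obtain xb yb where b: "b = (xb,yb)" by (cases b)
  have e1: "p * xa + q * ya = -1" and e2: "p * xb + q * yb = -1"
    using assms by (simp_all add: w a b rvec_def inner_Pair mult.commute)
  have h1: "p*xa = -1 - q*ya" "p*xb = -1 - q*yb"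
    using e1 e2 by linarith+
  have h2: "q*ya = -1 - p*xa" "q*yb = -1 - p*xb"
    using e1 e2 by linarith+
  have "real_of_int (det2 a b) * p = ya - yb"
  proof -
    have "real_of_int (det2 a b) * p = (p*xa) * yb - ya * (p*xb)" by (simp add: det2_def a b algebra_simps)
    also have "\<dots> = (-1 - q*ya) * yb - ya * (-1 - q*yb)" by (simp only: h1)
    finally show ?thesis by (simp add: algebra_simps)
  qed
  moreover have "real_of_int (det2 a b) * q = xb - xa"
  proof -
    have "real_of_int (det2 a b) * q = xa * (q*yb) - (q*ya) * xb" by (simp add: det2_def a b algebra_simps)
    also have "\<dots> = xa * (-1 - p*xb) - (-1 - p*xa) * xb" by (simp only: h2)
    finally show ?thesis by (simp add: algebra_simps)
  qed
  ultimately show ?thesis by (simp add: w)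
qed

lemma parity:
  fixes x0 y0 x1 y1 :: int
  assumes "gcd x0 y0 = 1" "gcd x1 y1 = 1" "gcd (x0+x1) (y0+y1) = 1"
  shows "odd (x0 * y1 - y0 * x1)"
proof -
  have g: "odd a \<or> odd b" if "gcd a b = 1" for a b :: int
  proof (rule ccontr)
    assume "\<not> (odd a \<or> odd b)"
    then have "2 dvd gcd a b" by auto
    then show False using that by simp
  qed
  show ?thesis using g[OF assms(1)] g[OF assms(2)] g[OF assms(3)]
    by (auto simp: even_mult_iff)
qed

lemma abs_ints: "real_of_int x * t \<in> \<int> \<Longrightarrow> real_of_int \<bar>x\<bar> * t \<in> \<int>"
  by (cases "x \<ge> 0") (auto simp: abs_if minus_in_Ints_iff)

lemma rvec_nz: "primitive v \<Longrightarrow> rvec v \<noteq> 0"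
  by (cases v) (auto simp: primitive_def rvec_def zero_prod_def)

theorem proposition4p3:
  fixes v0 v1 v2 :: "int \<times> int"
  assumes "fano_triangle v0 v1 v2"
    and "reduced_weight_system v0 v1 v2 = (1, 1, 1)"
  shows "odd (gorenstein_index (triangle v0 v1 v2))"
proof -
  have pr: "primitive v0" "primitive v1" "primitive v2" and int0: "0 \<in> interior (triangle v0 v1 v2)"
    using assms(1) unfolding fano_triangle_def by auto
  obtain x0 y0 where v0: "v0 = (x0,y0)" by (cases v0)
  obtain x1 y1 where v1: "v1 = (x1,y1)" by (cases v1)
  obtain x2 y2 where v2: "v2 = (x2,y2)" by (cases v2)
  define D01 where "D01 = det2 v0 v1"
  define D12 where "D12 = det2 v1 v2"
  define D02 where "D02 = det2 v0 v2"
  define G where "G = gcd \<bar>D12\<bar> (gcd \<bar>D02\<bar> \<bar>D01\<bar>)"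
  have red: "\<bar>D12\<bar> div G = 1" "\<bar>D02\<bar> div G = 1" "\<bar>D01\<bar> div G = 1"
    using assms(2) unfolding reduced_weight_system_def weight_system_def G_def D01_def D12_def D02_def
    by (simp_all add: Let_def)
  have G0: "G \<noteq> 0" using red(1) by auto
  have dv: "G dvd \<bar>D12\<bar>" "G dvd \<bar>D02\<bar>" "G dvd \<bar>D01\<bar>" unfolding G_def
    by (meson dvd_trans gcd_dvd1 gcd_dvd2)+
  have eqs: "\<bar>D12\<bar> = G" "\<bar>D02\<bar> = G" "\<bar>D01\<bar> = G"
    using red dv by (metis dvd_div_mult_self mult_1)+
  have D0: "D01 \<noteq> 0" using eqs G0 by auto
  have "0 \<in> triangle v0 v1 v2" using int0 interior_subset by blast
  then obtain a b c :: real where abc: "0 \<le> a" "0 \<le> b" "0 \<le> c" "a + b + c = 1"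
    and z: "0 = a *\<^sub>R rvec v0 + b *\<^sub>R rvec v1 + c *\<^sub>R rvec v2"
    unfolding triangle_def convex_hull_3 by blast
  have Ex: "a*x0 + b*x1 + c*x2 = 0" and Ey: "a*y0 + b*y1 + c*y2 = 0"
    using z by (simp_all add: v0 v1 v2 rvec_def zero_prod_def)
  have E1: "a * D01 - c * D12 = (a*x0 + b*x1 + c*x2) * y1 - (a*y0 + b*y1 + c*y2) * x1"
    by (simp add: D01_def D12_def det2_def v0 v1 v2 algebra_simps)
  have E1': "a * D01 - c * D12 = 0" using E1 Ex Ey by simp
  have E2: "- b * D01 - c * D02 = (a*x0 + b*x1 + c*x2) * y0 - (a*y0 + b*y1 + c*y2) * x0"
    by (simp add: D01_def D02_def det2_def v0 v1 v2 algebra_simps)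
  have E2': "- b * D01 - c * D02 = 0" using E2 Ex Ey by simp
  have rD0: "real_of_int D01 \<noteq> 0" using D0 by simp
  have s12: "D12 = D01"
  proof (rule ccontr)
    assume "D12 \<noteq> D01"
    then have "D12 = - D01" using eqs by arith
    then have "(a + c) * D01 = 0" using E1' by (simp add: algebra_simps)
    then have "a + c = 0" using rD0 by simp
    then have "a = 0" "c = 0" "b = 1" using abc by auto
    then show False using E2' rD0 by simp
  qed
  have s02: "D02 = - D01"
  proof (rule ccontr)
    assume "D02 \<noteq> - D01"
    then have "D02 = D01" using eqs by arith
    then have "(b + c) * D01 = 0" using E2' by (simp add: algebra_simps)
    then have "b + c = 0" using rD0 by simp
    then have "b = 0" "c = 0" "a = 1" using abc by auto
    then show False using E1' rD0 by simp
  qed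
  define sx where "sx = x0 + x1 + x2"
  define sy where "sy = y0 + y1 + y2"
  have A: "sx*y1 = sy*x1"
  proof -
    have "sx*y1 - sy*x1 = D01 - D12" by (simp add: sx_def sy_def D01_def D12_def det2_def v0 v1 v2 algebra_simps)
    then show ?thesis using s12 by simp
  qed
  have B: "sx*y0 = sy*x0"
  proof -
    have "sx*y0 - sy*x0 = - D01 - D02" by (simp add: sx_def sy_def D01_def D02_def det2_def v0 v1 v2 algebra_simps)
    then show ?thesis using s02 by simp
  qed
  have "sx * D01 = x0*(sx*y1) - x1*(sx*y0)" by (simp add: D01_def det2_def v0 v1 algebra_simps)
  also have "\<dots> = 0" by (simp add: A B)
  finally have sx0: "sx = 0" using D0 by simp
  have "sy * D01 = y1*(sy*x0) - y0*(sy*x1)" by (simp add: D01_def det2_def v0 v1 algebra_simps)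
  also have "\<dots> = 0" by (simp add: A[symmetric] B[symmetric])
  finally have sy0: "sy = 0" using D0 by simp
  have x2: "x2 = -(x0+x1)" and y2: "y2 = -(y0+y1)" using sx0 sy0 sx_def sy_def by auto
  have gg: "gcd (x0+x1) (y0+y1) = gcd (-(x0+x1)) (-(y0+y1))" by (simp only: gcd_neg1_int gcd_neg2_int)
  have "gcd (x0+x1) (y0+y1) = 1" using pr(3) unfolding gg primitive_def v2 x2 y2 by simp
  then have oddD: "odd D01" using parity[of x0 y0 x1 y1] pr(1,2)
    by (simp add: primitive_def v0 v1 D01_def det2_def)
  define Dl where "Dl = dual_polytope (triangle v0 v1 v2)"
  have DlE: "Dl = {u. inner u (rvec v0) \<ge> -1 \<and> inner u (rvec v1) \<ge> -1 \<and> inner u (rvec v2) \<ge> -1}"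
    unfolding Dl_def by (rule dual_eq)
  define d where "d = nat \<bar>D01\<bar>"
  have dr: "real d = real_of_int \<bar>D01\<bar>" unfolding d_def by simp
  have d1: "d \<ge> 1" using D0 unfolding d_def by simp
  have oddd: "odd d" using oddD unfolding d_def by (simp add: even_nat_iff)
  have K: "real d * fst w \<in> \<int> \<and> real d * snd w \<in> \<int>" if ext: "w extreme_point_of Dl" for w
  proof -
    have wD: "w \<in> Dl" using ext extreme_point_of_def by blast
    then have ge: "inner w (rvec v0) \<ge> -1" "inner w (rvec v1) \<ge> -1" "inner w (rvec v2) \<ge> -1"
      using DlE by auto
    have Dl2: "Dl = {u. inner u (rvec v0) \<ge> -1 \<and> inner u (rvec v2) \<ge> -1 \<and> inner u (rvec v1) \<ge> -1}"
      using DlE by auto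
    have Dl3: "Dl = {u. inner u (rvec v1) \<ge> -1 \<and> inner u (rvec v2) \<ge> -1 \<and> inner u (rvec v0) \<ge> -1}"
      using DlE by auto
    have n01: "\<not> (inner w (rvec v0) > -1 \<and> inner w (rvec v1) > -1)"
      using noext[OF rvec_nz[OF pr(3)], of w "rvec v0" "rvec v1" Dl] DlE wD ext by auto
    have n02: "\<not> (inner w (rvec v0) > -1 \<and> inner w (rvec v2) > -1)"
      using noext[OF rvec_nz[OF pr(2)], of w "rvec v0" "rvec v2" Dl] Dl2 wD ext by auto
    have n12: "\<not> (inner w (rvec v1) > -1 \<and> inner w (rvec v2) > -1)"
      using noext[OF rvec_nz[OF pr(1)], of w "rvec v1" "rvec v2" Dl] Dl3 wD ext by auto
    have "(inner w (rvec v0) = -1 \<and> inner w (rvec v1) = -1) \<or>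
          (inner w (rvec v0) = -1 \<and> inner w (rvec v2) = -1) \<or>
          (inner w (rvec v1) = -1 \<and> inner w (rvec v2) = -1)"
      using ge n01 n02 n12 by linarith
    moreover have "\<bar>det2 v0 v1\<bar> = \<bar>D01\<bar>" "\<bar>det2 v0 v2\<bar> = \<bar>D01\<bar>" "\<bar>det2 v1 v2\<bar> = \<bar>D01\<bar>"
      using eqs unfolding D01_def D02_def D12_def by auto
    ultimately show ?thesis unfolding dr
      using cramer[of w v0 v1] cramer[of w v0 v2] cramer[of w v1 v2]
      by (metis abs_ints)
  qed
  define P where "P g \<longleftrightarrow> g \<ge> 1 \<and> (\<forall>u. u extreme_point_of ((\<lambda>x. real g *\<^sub>R x) ` Dl) \<longrightarrow> integral_point u)" for g :: nat
  have gi: "gorenstein_index (triangle v0 v1 v2) = (LEAST g. P g)"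
    unfolding gorenstein_index_def P_def Dl_def by simp
  have S1: "\<exists>w. u = real n *\<^sub>R w \<and> w extreme_point_of Dl"
    if "n \<ge> 1" "u extreme_point_of ((\<lambda>x. real n *\<^sub>R x) ` Dl)" for n u
  proof -
    have "u \<in> (\<lambda>x. real n *\<^sub>R x) ` Dl" using that(2) extreme_point_of_def by blast
    then obtain w where w: "u = real n *\<^sub>R w" by blast
    then have "w extreme_point_of Dl" using that ext_scale[of "real n" w Dl] by simp
    then show ?thesis using w by blast
  qed
  have S2: "(real n *\<^sub>R w) extreme_point_of ((\<lambda>x. real n *\<^sub>R x) ` Dl)"
    if "n \<ge> 1" "w extreme_point_of Dl" for n w
    using that ext_scale[of "real n" w Dl] by simp
  have Pd: "P d"
    unfolding P_def
  proof (intro conjI allI impI)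
    show "1 \<le> d" by (rule d1)
    fix u assume "u extreme_point_of ((\<lambda>x. real d *\<^sub>R x) ` Dl)"
    then obtain w where "u = real d *\<^sub>R w" "w extreme_point_of Dl" using S1 d1 by blast
    then show "integral_point u" using K unfolding integral_point_def by simp
  qed
  define Gi where "Gi = (LEAST g. P g)"
  have PG: "P Gi" unfolding Gi_def by (rule LeastI[of P d, OF Pd])
  have G1: "Gi \<ge> 1" using PG P_def by simp
  show ?thesis
  proof (rule ccontr)
    assume ev: "\<not> odd (gorenstein_index (triangle v0 v1 v2))"
    then have evG: "even Gi" using gi Gi_def by simp
    define h where "h = gcd Gi d"
    have h1: "h \<ge> 1" unfolding h_def using d1 by (simp add: Suc_le_eq)
    have "h dvd d" unfolding h_def by simp
    then have oh: "odd h" using oddd by (meson dvd_trans)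
    have "h \<le> Gi" unfolding h_def using G1 by (simp add: gcd_le1_nat)
    then have hlt: "h < Gi" using oh evG by (cases "h = Gi") auto
    have Ph: "P h" unfolding P_def
    proof (intro conjI allI impI)
      show "1 \<le> h" by (rule h1)
      fix u assume "u extreme_point_of ((\<lambda>x. real h *\<^sub>R x) ` Dl)"
      then obtain w where uw: "u = real h *\<^sub>R w" and we: "w extreme_point_of Dl" using S1 h1 by blast
      have "integral_point (real Gi *\<^sub>R w)" using PG S2[OF G1 we] unfolding P_def by blast
      then have g1: "real Gi * fst w \<in> \<int>" "real Gi * snd w \<in> \<int>" unfolding integral_point_def by auto
      have g2: "real d * fst w \<in> \<int>" "real d * snd w \<in> \<int>" using K[OF we] by auto
      obtain s t :: int where st: "s * int Gi + t * int d = gcd (int Gi) (int d)"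
        using bezout_int by blast
      have "int h = gcd (int Gi) (int d)" unfolding h_def by simp
      then have hst: "real h = of_int s * real Gi + of_int t * real d"
        using st by (metis of_int_add of_int_mult of_int_of_nat_eq)
      have "real h * fst w = of_int s * (real Gi * fst w) + of_int t * (real d * fst w)"
        unfolding hst by (simp add: algebra_simps)
      moreover have "real h * snd w = of_int s * (real Gi * snd w) + of_int t * (real d * snd w)"
        unfolding hst by (simp add: algebra_simps)
      ultimately show "integral_point u" unfolding uw integral_point_def
        using g1 g2 by (simp add: Ints_add Ints_mult)
    qed
    have "Gi \<le> h" unfolding Gi_def by (rule Least_le[of P h, OF Ph])
    then show False using hlt by simp
  qed
qed

end
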